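(* Let $C>0$ and $\beta_1>1/\sqrt2$ be constants, and suppose that $$-4\sum_{n=1}^\infty\log\big(1-e^{-2n\beta^2}\big)<\frac{C}{\beta^2}$$ holds for $\beta=\beta_1$. Then it holds for all $\beta\ge\beta_1$. *)

theory Defs
  imports "HOL-Analysis.Analysis"
begin

end

theory Submission
  imports Defs
begin

lemma negln_le: fixes u :: real assumes "0 \<le> u" "u < 1"
  shows "- ln (1 - u) \<le> u / (1 - u)"
proof -
  have "ln (1 / (1 - u)) \<le> 1 / (1 - u) - 1" using assms by (intro ln_le_minus_one) auto
  moreover have "ln (1 / (1 - u)) = - ln (1 - u)" using assms by (simp add: ln_div)
  moreover have "1 / (1 - u) - 1 = u / (1 - u)" using assms by (simp add: field_simps)
  ultimately show ?thesis by simp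
qed

lemma term_mono:
  fixes c x y :: real
  assumes c: "c \<ge> 2" and x: "1/2 \<le> x" and xy: "x \<le> y"
  shows "y * (- ln (1 - exp (- c * y))) \<le> x * (- ln (1 - exp (- c * x)))"
proof (rule DERIV_nonpos_imp_decreasing_open[OF xy, where f = "\<lambda>t. t * (- ln (1 - exp (- c * t)))"])
  fix t assume t: "x < t" "t < y"
  have tpos: "t > 0" using t x by linarith
  define u where "u = exp (- c * t)"
  have u0: "0 < u" by (simp add: u_def)
  have u1: "u < 1" unfolding u_def using tpos c by simp
  have D: "((\<lambda>t. t * (- ln (1 - exp (- c * t)))) has_real_derivative
     (- ln (1 - u) + t * (- ((c * u) / (1 - u))))) (at t)"
    unfolding u_def
    by (rule derivative_eq_intros refl | use u1 in \<open>simp add: u_def\<close>)+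
  have ct: "c * t \<ge> 1" proof -
    have "2 * (1/2) \<le> c * t" using c t x by (intro mult_mono) auto
    thus ?thesis by simp
  qed
  have "- ln (1 - u) \<le> u / (1 - u)" using u0 u1 by (intro negln_le) auto
  also have "\<dots> \<le> (c * t) * (u / (1 - u))" using ct u0 u1
    using mult_right_mono[of 1 "c*t" "u/(1-u)"] by simp
  finally have "- ln (1 - u) + t * (- ((c * u) / (1 - u))) \<le> 0" by (simp add: field_simps)
  with D show "\<exists>y. ((\<lambda>t. t * (- ln (1 - exp (- c * t)))) has_real_derivative y) (at t) \<and> y \<le> 0"
    by blast
next
  have "exp (- c * t) < 1" if "t \<in> {x..y}" for t
  proof -
    have "0 < c * t" using that x c by (intro mult_pos_pos) auto
    thus ?thesis by simp
  qed
  then have e: "\<forall>t\<in>{x..y}. 1 - exp (- c * t) \<noteq> 0" by fastforce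
  show "continuous_on {x..y} (\<lambda>t. t * (- ln (1 - exp (- c * t))))"
    by (intro continuous_intros) (use e in blast)
qed

lemma summ_a:
  fixes t :: real assumes t: "t > 1/2"
  shows "summable (\<lambda>n. - ln (1 - exp (- 2 * real (Suc n) * t)))"
proof (rule summable_comparison_test)
  show "summable (\<lambda>n. 2 * exp (- 2 * t) ^ Suc n)"
    by (intro summable_mult summable_Suc_iff[THEN iffD2] summable_geometric) (use t in simp)
  show "\<exists>N. \<forall>n\<ge>N. norm (- ln (1 - exp (- 2 * real (Suc n) * t))) \<le> 2 * exp (- 2 * t) ^ Suc n"
  proof (intro exI allI impI)
    fix n :: nat
    define u where "u = exp (- 2 * real (Suc n) * t)"
    have ue: "u = exp (- 2 * t) ^ Suc n" unfolding u_def
      using exp_of_nat_mult[of "Suc n" "- 2 * t"]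
      by (simp only: mult_ac)
    have u0: "0 < u" by (simp add: u_def)
    have "2 * real (Suc n) * t \<ge> 2 * 1 * t" using t by (intro mult_right_mono mult_left_mono) auto
    hence "- 2 * real (Suc n) * t \<le> -1" using t by linarith
    hence "u \<le> exp (-1)" unfolding u_def by simp
    also have "exp (-1::real) < 1/2"
    proof -
      have h: "3/2 \<le> exp (1/2::real)" using exp_ge_add_one_self[of "1/2::real"] by simp
      have "exp (1::real) = exp (1/2) * exp (1/2)" by (simp flip: exp_add)
      also have "\<dots> \<ge> 3/2 * (3/2)" using h by (intro mult_mono) auto
      finally have "(2::real) < exp 1" by simp
      thus ?thesis by (simp add: exp_minus field_simps)
    qed
    finally have u2: "u < 1/2" .
    have nn: "0 \<le> - ln (1 - u)" using u0 u2 by simp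
    have "- ln (1 - u) \<le> u / (1 - u)" using u0 u2 by (intro negln_le) auto
    also have "\<dots> \<le> 2 * u" using u0 u2 by (simp add: field_simps)
    finally have "norm (- ln (1 - u)) \<le> 2 * u" using nn by simp
    then show "norm (- ln (1 - exp (- 2 * real (Suc n) * t))) \<le> 2 * exp (- 2 * t) ^ Suc n"
      by (simp only: u_def ue[unfolded u_def])
  qed
qed

theorem lemma2p12:
  fixes C \<beta>\<^sub>1 :: real
  assumes "C > 0" and "\<beta>\<^sub>1 > 1 / sqrt 2"
    and "- 4 * (\<Sum>n. ln (1 - exp (- 2 * real (Suc n) * \<beta>\<^sub>1\<^sup>2))) < C / \<beta>\<^sub>1\<^sup>2"
  shows "\<forall>\<beta>\<ge>\<beta>\<^sub>1. - 4 * (\<Sum>n. ln (1 - exp (- 2 * real (Suc n) * \<beta>\<^sup>2))) < C / \<beta>\<^sup>2"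
proof (intro allI impI)
  fix \<beta> :: real assume b: "\<beta> \<ge> \<beta>\<^sub>1"
  define x1 where "x1 = \<beta>\<^sub>1\<^sup>2"
  define x where "x = \<beta>\<^sup>2"
  define a where "a = (\<lambda>t n. - ln (1 - exp (- 2 * real (Suc n) * t)))"
  have b1: "\<beta>\<^sub>1 > 0" using assms(2) by (smt (verit) divide_pos_pos real_sqrt_gt_zero)
  have "(1 / sqrt 2)\<^sup>2 < \<beta>\<^sub>1\<^sup>2" using assms(2) by (intro power_strict_mono) auto
  hence x1h: "x1 > 1/2" by (simp add: x1_def power_divide)
  have xx1: "x1 \<le> x" unfolding x1_def x_def using b b1 by (intro power_mono) auto
  hence xh: "x > 1/2" using x1h by linarith
  have s1: "summable (a x1)" using summ_a[OF x1h] by (simp add: a_def)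
  have s: "summable (a x)" using summ_a[OF xh] by (simp add: a_def)
  have eq: "- 4 * (\<Sum>n. ln (1 - exp (- 2 * real (Suc n) * t))) = 4 * suminf (a t)"
    if "t > 1/2" for t
    using suminf_minus[OF summ_a[OF that]] unfolding a_def by simp
  have le: "x * a x n \<le> x1 * a x1 n" for n
    unfolding a_def using term_mono[of "2 * real (Suc n)" x1 x] x1h xx1
    by (simp add: mult_ac)
  have "x * suminf (a x) = (\<Sum>n. x * a x n)" using suminf_mult[OF s] by simp
  also have "\<dots> \<le> (\<Sum>n. x1 * a x1 n)"
    by (intro suminf_le le summable_mult s s1)
  also have "\<dots> = x1 * suminf (a x1)" using suminf_mult[OF s1] by simp
  finally have L: "x * suminf (a x) \<le> x1 * suminf (a x1)" .
  have "4 * suminf (a x1) < C / x1" using assms(3) eq[OF x1h] by (simp add: x1_def)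
  hence "4 * (x1 * suminf (a x1)) < C" using x1h by (simp add: field_simps)
  hence "4 * (x * suminf (a x)) < C" using L by linarith
  hence "4 * suminf (a x) < C / x" using xh by (simp add: field_simps)
  thus "- 4 * (\<Sum>n. ln (1 - exp (- 2 * real (Suc n) * \<beta>\<^sup>2))) < C / \<beta>\<^sup>2"
    using eq[OF xh] by (simp add: x_def)
qed

end
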